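(* Let $Q$ and $W$ satisfy the standing assumptions with $W=Y$, and let $l\ge1$. If $Q$ is domino consistent, then $\hat Q^{l\triangledown}$ realizes the strongest asynchronous $l$-complete approximation, i.e. $\mathcal B(\hat Q^{l\triangledown})=\hat{\mathcal B}^l$.
   Context: Strings and signals: $\diamond$ is a symbol not in any other set considered. For a set $A$ and $l\in\mathbb N_0$, $A^l$ is the set of strings of length $l$ over $A$, indexed $\zeta=\zeta(0)\cdots\zeta(l-1)$. For a map $w$ on $\mathbb Z$ (or a string) and integers $t_1\le t_2$, $w|_{[t_1,t_2]}=w(t_1)\cdots w(t_2)$ is the string of length $t_2-t_1+1$ (absolute time forgotten). For a set $\mathcal S$ of such maps, $\mathcal S|_{[t_1,t_2]}=\{s|_{[t_1,t_2]}:s\in\mathcal S\}$. State machines: a state machine is $Q=(X,U,Y,\delta,X_0)$ with $X_0\subseteq X$, $\delta\subseteq X\times U\times Y\times X$. Let $H_\delta(x)=\{y:\exists u,x'.\,(x,u,y,x')\in\delta\}$, $F_\delta(x,u)=\{x':\exists y\in H_\delta(x).\,(x,u,y,x')\in\delta\}$. The full behavior $\mathcal B_f(Q)$ is the set of $(\mu,\nu,\xi)\in(U\times Y\times X)^{\mathbb N_0}$ with $\xi(0)\in X_0$ and $(\xi(k),\mu(k),\nu(k),\xi(k+1))\in\delta$ for all $k\in\mathbb N_0$. $Q$ is live and reachable if every $x\in X_0$ is $\xi(0)$ for some $(\mu,\nu,\xi)\in\mathcal B_f(Q)$ and every $x\in X$ is $\xi(k)$ for some such trajectory and some $k$. Standing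 assumptions: $Q=(X,U,Y,\delta,X_0)$ is live and reachable and satisfies $(x,u,y,x')\in\delta\iff(x'\in F_\delta(x,u)\wedge y\in H_\delta(x))$ for all $x,x'\in X,u\in U,y\in Y$; the external signal space $W$ is finite and either $W=U\times Y$ or $W=Y$ (here $W=Y$). Behaviors: for a state machine $Q'$ with input set $U$ and output set $Y$, $\mathcal B(Q')$ is the set of $w:\mathbb Z\to Y\cup\{\diamond\}$ such that for some $(\mu,\nu,\xi)\in\mathcal B_f(Q')$, $w(k)=\diamond$ for $k<0$ and $w(k)=\nu(k)$ for $k\ge0$. $\mathcal B_S(Q)$ is the set of pairs $(w,\xi)$ of maps on $\mathbb Z$ with $w(k)=\xi(k)=\diamond$ for $k<0$ and $(w(k),\xi(k))=(\nu(k),\xi'(k))$ for $k\ge0$, for some $(\mu,\nu,\xi')\in\mathcal B_f(Q)$. For a set $\mathcal B$ of maps on $\mathbb Z$, $\Pi_l(\mathcal B)=\bigcup_{k\in\mathbb N_0}\mathcal B|_{[k-l+1,k]}$. SAlCA: for $l\in\mathbb N_0$, $\hat{\mathcal B}^l$ is the set of $w:\mathbb Z\to W\cup\{\diamond\}$ with $w(k)=\diamond$ for $k<0$, $w(k)\in W$ for $k\ge0$, $w|_{[-l,0]}\in\mathcal B(Q)|_{[-l,0]}$ and $w|_{[k-l,k]}\in\Pi_{l+1}(\mathcal B(Q))$ for all $k\in\mathbb N_0$. Corresponding strings: for integers $a,b$ and $x\in X$, $E^{[a,b]}(x)=\{\zeta:\exists(w,\xi)\in\mathcal B_S(Q),k\in\mathbb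 N_0:\ \xi(k)=x,\ \zeta=w|_{[k+a,k+b]}\}$; $I^l_l=[0,l-1]$. Quotient state machine (for $W=Y$): $\hat Q^{l\triangledown}=(\hat X^{l\triangledown},U,Y,\hat\delta^{l\triangledown},\hat X^{l\triangledown}_0)$ with $\hat X^{l\triangledown}=\{E^{I^l_l}(x):x\in X\}$ (a set of subsets of $Y^l$), $\hat X^{l\triangledown}_0=\{E^{I^l_l}(x):x\in X_0\}$, and $(\hat x,u,y,\hat x')\in\hat\delta^{l\triangledown}$ iff there exist $x,x'\in X$ with $\hat x=E^{I^l_l}(x)$, $\hat x'=E^{I^l_l}(x')$ and $(x,u,y,x')\in\delta$. Domino consistency (for $W=Y$): $Q$ is domino consistent if for all $\zeta\in\Pi_{l+1}(\mathcal B(Q))$ and all $\hat y\in\hat X^{l\triangledown}$ with $\zeta|_{[0,l-1]}\in\hat y$ there exists $x\in X$ with $E^{I^l_l}(x)=\hat y$ and $\zeta\in E^{[0,l]}(x)$. *)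

theory Defs
  imports Main
begin

text \<open>Conventions: the symbol diamond is encoded as None; signals on Z are maps
int => 'y option; strings are lists.\<close>

record ('x,'u,'y) sm =
  sm_X  :: "'x set"
  sm_U  :: "'u set"
  sm_Y  :: "'y set"
  sm_delta :: "('x \<times> 'u \<times> 'y \<times> 'x) set"
  sm_X0 :: "'x set"

definition sm_wf :: "('x,'u,'y) sm \<Rightarrow> bool" where
  "sm_wf Q \<longleftrightarrow> sm_X0 Q \<subseteq> sm_X Q \<and>
     sm_delta Q \<subseteq> sm_X Q \<times> sm_U Q \<times> sm_Y Q \<times> sm_X Q"

definition H_delta :: "('x \<times> 'u \<times> 'y \<times> 'x) set \<Rightarrow> 'x \<Rightarrow> 'y set" where
  "H_delta \<delta> x = {y. \<exists>u x'. (x,u,y,x') \<in> \<delta>}"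

definition F_delta :: "('x \<times> 'u \<times> 'y \<times> 'x) set \<Rightarrow> 'x \<Rightarrow> 'u \<Rightarrow> 'x set" where
  "F_delta \<delta> x u = {x'. \<exists>y \<in> H_delta \<delta> x. (x,u,y,x') \<in> \<delta>}"

definition full_beh :: "('x,'u,'y) sm \<Rightarrow> ((nat \<Rightarrow> 'u) \<times> (nat \<Rightarrow> 'y) \<times> (nat \<Rightarrow> 'x)) set" where
  "full_beh Q = {(\<mu>,\<nu>,\<xi>). \<xi> 0 \<in> sm_X0 Q \<and>
     (\<forall>k. \<mu> k \<in> sm_U Q \<and> \<nu> k \<in> sm_Y Q \<and> \<xi> k \<in> sm_X Q \<and>
          (\<xi> k, \<mu> k, \<nu> k, \<xi> (Suc k)) \<in> sm_delta Q)}"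

definition live_reachable :: "('x,'u,'y) sm \<Rightarrow> bool" where
  "live_reachable Q \<longleftrightarrow>
     (\<forall>x \<in> sm_X0 Q. \<exists>\<mu> \<nu> \<xi>. (\<mu>,\<nu>,\<xi>) \<in> full_beh Q \<and> \<xi> 0 = x) \<and>
     (\<forall>x \<in> sm_X Q. \<exists>\<mu> \<nu> \<xi> k. (\<mu>,\<nu>,\<xi>) \<in> full_beh Q \<and> \<xi> k = x)"

definition standing_assumptions :: "('x,'u,'y) sm \<Rightarrow> bool" where
  "standing_assumptions Q \<longleftrightarrow> sm_wf Q \<and> live_reachable Q \<and> finite (sm_Y Q) \<and>
     (\<forall>x \<in> sm_X Q. \<forall>x' \<in> sm_X Q. \<forall>u \<in> sm_U Q. \<forall>y \<in> sm_Y Q.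
        (x,u,y,x') \<in> sm_delta Q \<longleftrightarrow>
        (x' \<in> F_delta (sm_delta Q) x u \<and> y \<in> H_delta (sm_delta Q) x))"

definition ext :: "(nat \<Rightarrow> 'a) \<Rightarrow> int \<Rightarrow> 'a option" where
  "ext f k = (if k < 0 then None else Some (f (nat k)))"

definition beh :: "('x,'u,'y) sm \<Rightarrow> (int \<Rightarrow> 'y option) set" where
  "beh Q = {w. \<exists>\<mu> \<nu> \<xi>. (\<mu>,\<nu>,\<xi>) \<in> full_beh Q \<and> w = ext \<nu>}"

definition behS :: "('x,'u,'y) sm \<Rightarrow> ((int \<Rightarrow> 'y option) \<times> (int \<Rightarrow> 'x option)) set" where
  "behS Q = {(w,\<xi>'). \<exists>\<mu> \<nu> \<xi>. (\<mu>,\<nu>,\<xi>) \<in> full_beh Q \<and> w = ext \<nu> \<and> \<xi>' = ext \<xi>}"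

definition restr :: "(int \<Rightarrow> 'a) \<Rightarrow> int \<Rightarrow> int \<Rightarrow> 'a list" where
  "restr w t1 t2 = map w [t1..t2]"

definition restr_set :: "(int \<Rightarrow> 'a) set \<Rightarrow> int \<Rightarrow> int \<Rightarrow> 'a list set" where
  "restr_set S t1 t2 = (\<lambda>s. restr s t1 t2) ` S"

definition Pi_l :: "nat \<Rightarrow> (int \<Rightarrow> 'a) set \<Rightarrow> 'a list set" where
  "Pi_l l B = (\<Union>k::nat. restr_set B (int k - int l + 1) (int k))"

definition salca :: "('x,'u,'y) sm \<Rightarrow> nat \<Rightarrow> (int \<Rightarrow> 'y option) set" where
  "salca Q l = {w. (\<forall>k<0. w k = None) \<and> (\<forall>k\<ge>0. w k \<in> Some ` sm_Y Q) \<and>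
     restr w (- int l) 0 \<in> restr_set (beh Q) (- int l) 0 \<and>
     (\<forall>k::nat. restr w (int k - int l) (int k) \<in> Pi_l (Suc l) (beh Q))}"

definition Estr :: "('x,'u,'y) sm \<Rightarrow> int \<Rightarrow> int \<Rightarrow> 'x \<Rightarrow> 'y option list set" where
  "Estr Q a b x = {\<zeta>. \<exists>w \<xi> k. (w,\<xi>) \<in> behS Q \<and> \<xi> (int k) = Some x \<and>
                         \<zeta> = restr w (int k + a) (int k + b)}"

definition EI :: "('x,'u,'y) sm \<Rightarrow> nat \<Rightarrow> 'x \<Rightarrow> 'y option list set" where
  "EI Q l x = Estr Q 0 (int l - 1) x"

definition quot :: "('x,'u,'y) sm \<Rightarrow> nat \<Rightarrow> ('y option list set,'u,'y) sm" where
  "quot Q l = \<lparr> sm_X = EI Q l ` sm_X Q, sm_U = sm_U Q, sm_Y = sm_Y Q,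
     sm_delta = {(hx,u,y,hx'). \<exists>x x'. hx = EI Q l x \<and> hx' = EI Q l x' \<and>
                                (x,u,y,x') \<in> sm_delta Q},
     sm_X0 = EI Q l ` sm_X0 Q \<rparr>"

definition domino_consistent :: "('x,'u,'y) sm \<Rightarrow> nat \<Rightarrow> bool" where
  "domino_consistent Q l \<longleftrightarrow>
     (\<forall>\<zeta> \<in> Pi_l (Suc l) (beh Q). \<forall>hy \<in> sm_X (quot Q l).
        take l \<zeta> \<in> hy \<longrightarrow>
        (\<exists>x \<in> sm_X Q. EI Q l x = hy \<and> \<zeta> \<in> Estr Q 0 (int l) x))"

end

theory Submission imports Defs begin

lemma restr_eq: "restr w a b = map (\<lambda>i. w (a + int i)) [0..<nat (b - a + 1)]"
  unfolding restr_def by (rule nth_equalityI) auto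

lemma ext_nat1: "ext f (int k) = Some (f k)" by (simp add: ext_def)
lemma ext_nat2: "ext f (int k + int i) = Some (f (k+i))"
  by (simp add: ext_def flip: of_nat_add)

lemma map_upt_eqD: "map f [0..<n] = map g [0..<n] \<Longrightarrow> i < n \<Longrightarrow> f i = g i"
  by (simp add: map_eq_conv)

lemma Estr_iff:
  "\<zeta> \<in> Estr Q 0 (int n - 1) x \<longleftrightarrow>
   (\<exists>\<mu> \<nu> \<xi> t. (\<mu>,\<nu>,\<xi>) \<in> full_beh Q \<and> \<xi> t = x \<and> \<zeta> = map (\<lambda>i. Some (\<nu> (t+i))) [0..<n])"
proof
  assume "\<zeta> \<in> Estr Q 0 (int n - 1) x"
  then obtain \<mu> \<nu> \<xi> k where tr: "(\<mu>,\<nu>,\<xi>) \<in> full_beh Q" and x: "ext \<xi> (int k) = Some x"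
    and z: "\<zeta> = restr (ext \<nu>) (int k + 0) (int k + (int n - 1))"
    unfolding Estr_def behS_def by blast
  have "\<xi> k = x" using x by (simp add: ext_nat1)
  moreover have "\<zeta> = map (\<lambda>i. Some (\<nu> (k+i))) [0..<n]"
    using z by (simp add: restr_eq ext_nat2)
  ultimately show "\<exists>\<mu> \<nu> \<xi> t. (\<mu>,\<nu>,\<xi>) \<in> full_beh Q \<and> \<xi> t = x \<and> \<zeta> = map (\<lambda>i. Some (\<nu> (t+i))) [0..<n]"
    using tr by blast
next
  assume "\<exists>\<mu> \<nu> \<xi> t. (\<mu>,\<nu>,\<xi>) \<in> full_beh Q \<and> \<xi> t = x \<and> \<zeta> = map (\<lambda>i. Some (\<nu> (t+i))) [0..<n]"
  then obtain \<mu> \<nu> \<xi> t where tr: "(\<mu>,\<nu>,\<xi>) \<in> full_beh Q" and x: "\<xi> t = x"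
    and z: "\<zeta> = map (\<lambda>i. Some (\<nu> (t+i))) [0..<n]" by blast
  have "(ext \<nu>, ext \<xi>) \<in> behS Q" using tr unfolding behS_def by blast
  moreover have "ext \<xi> (int t) = Some x" using x by (simp add: ext_nat1)
  moreover have "\<zeta> = restr (ext \<nu>) (int t + 0) (int t + (int n - 1))"
    using z by (simp add: restr_eq ext_nat2)
  ultimately show "\<zeta> \<in> Estr Q 0 (int n - 1) x" unfolding Estr_def by blast
qed

lemma concat:
  assumes wf: "sm_wf Q" and lr: "live_reachable Q" and xX: "x \<in> sm_X Q"
    and tr: "(x,u,y,x') \<in> sm_delta Q" and b2: "(\<mu>2,\<nu>2,\<xi>2) \<in> full_beh Q" and x2: "\<xi>2 t2 = x'"
  shows "\<exists>\<mu> \<nu> \<xi> t. (\<mu>,\<nu>,\<xi>) \<in> full_beh Q \<and> \<xi> t = x \<and> \<nu> t = y \<and> (\<forall>i. \<nu> (Suc t + i) = \<nu>2 (t2 + i))"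
proof -
  obtain \<mu>1 \<nu>1 \<xi>1 t1 where b1: "(\<mu>1,\<nu>1,\<xi>1) \<in> full_beh Q" and x1: "\<xi>1 t1 = x"
    using lr xX unfolding live_reachable_def by blast
  have uy: "u \<in> sm_U Q" "y \<in> sm_Y Q" using tr wf unfolding sm_wf_def by auto
  define \<mu> where "\<mu> i = (if i < t1 then \<mu>1 i else if i = t1 then u else \<mu>2 (i - Suc t1 + t2))" for i
  define \<nu> where "\<nu> i = (if i < t1 then \<nu>1 i else if i = t1 then y else \<nu>2 (i - Suc t1 + t2))" for i
  define \<xi> where "\<xi> i = (if i \<le> t1 then \<xi>1 i else \<xi>2 (i - Suc t1 + t2))" for i
  have "(\<mu>,\<nu>,\<xi>) \<in> full_beh Q"
    unfolding full_beh_def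
  proof (simp, intro conjI allI)
    show "\<xi> 0 \<in> sm_X0 Q" using b1 unfolding full_beh_def \<xi>_def by auto
  next
    fix k
    show "\<mu> k \<in> sm_U Q" using b1 b2 uy unfolding full_beh_def \<mu>_def by auto
    show "\<nu> k \<in> sm_Y Q" using b1 b2 uy unfolding full_beh_def \<nu>_def by auto
    show "\<xi> k \<in> sm_X Q" using b1 b2 unfolding full_beh_def \<xi>_def by auto
    show "(\<xi> k, \<mu> k, \<nu> k, \<xi> (Suc k)) \<in> sm_delta Q"
    proof (cases "k < t1")
      case True then show ?thesis using b1 unfolding full_beh_def \<xi>_def \<mu>_def \<nu>_def by auto
    next
      case False
      show ?thesis
      proof (cases "k = t1")
        case True then show ?thesis using tr x1 x2 unfolding \<xi>_def \<mu>_def \<nu>_def by auto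
      next
        case False
        with \<open>\<not> k < t1\<close> have "k > t1" by simp
        then have "Suc k - Suc t1 + t2 = Suc (k - Suc t1 + t2)" by simp
        then show ?thesis using b2 \<open>k > t1\<close> unfolding full_beh_def \<xi>_def \<mu>_def \<nu>_def by auto
      qed
    qed
  qed
  moreover have "\<xi> t1 = x" using x1 by (simp add: \<xi>_def)
  moreover have "\<nu> t1 = y" by (simp add: \<nu>_def)
  moreover have "\<forall>i. \<nu> (Suc t1 + i) = \<nu>2 (t2 + i)" by (simp add: \<nu>_def add.commute)
  ultimately show ?thesis by blast
qed

lemma shift:
  assumes "(\<mu>,\<nu>,\<xi>) \<in> full_beh Q" "\<xi> t \<in> sm_X0 Q"
  shows "(\<lambda>i. \<mu> (t+i), \<lambda>i. \<nu> (t+i), \<lambda>i. \<xi> (t+i)) \<in> full_beh Q"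
  using assms unfolding full_beh_def by auto

lemma transfer:
  assumes "EI Q l a = EI Q l b" "(\<mu>1,\<nu>1,\<xi>1) \<in> full_beh Q" "\<xi>1 t = a"
  shows "\<exists>\<mu>2 \<nu>2 \<xi>2 t2. (\<mu>2,\<nu>2,\<xi>2) \<in> full_beh Q \<and> \<xi>2 t2 = b \<and> (\<forall>i<l. \<nu>2 (t2+i) = \<nu>1 (t+i))"
proof -
  have "map (\<lambda>i. Some (\<nu>1 (t+i))) [0..<l] \<in> EI Q l a"
    unfolding EI_def Estr_iff using assms(2,3) by blast
  then have "map (\<lambda>i. Some (\<nu>1 (t+i))) [0..<l] \<in> EI Q l b" using assms(1) by simp
  then obtain \<mu>2 \<nu>2 \<xi>2 t2 where "(\<mu>2,\<nu>2,\<xi>2) \<in> full_beh Q" "\<xi>2 t2 = b"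
    "map (\<lambda>i. Some (\<nu>1 (t+i))) [0..<l] = map (\<lambda>i. Some (\<nu>2 (t2+i))) [0..<l]"
    unfolding EI_def Estr_iff by blast
  then show ?thesis by (auto simp: map_eq_conv)
qed

lemma agree:
  assumes "\<And>i. i < n \<Longrightarrow> \<nu> i = \<nu>' i" "b < int n"
  shows "restr (ext \<nu>) a b = restr (ext \<nu>') a b"
  unfolding restr_def
proof (rule map_cong[OF refl])
  fix i assume "i \<in> set [a..b]"
  then have "i \<le> b" by simp
  then show "ext \<nu> i = ext \<nu>' i" using assms unfolding ext_def by (auto simp: nat_less_iff)
qed

lemma Pi_mem: "v \<in> B \<Longrightarrow> restr v (int k - int l) (int k) \<in> Pi_l (Suc l) B"
  unfolding Pi_l_def restr_set_def
  apply (rule UN_I[of k], simp)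
  by (simp add: algebra_simps)

lemma window: "restr w (int k - int l) (int k) = map (\<lambda>i. w (int k - int l + int i)) [0..<Suc l]"
proof -
  have "nat (int k - (int k - int l) + 1) = Suc l" by simp
  then show ?thesis by (simp only: restr_eq)
qed

lemma dir1:
  assumes sa: "standing_assumptions Q" and l1: "l \<ge> 1"
  shows "beh (quot Q l) \<subseteq> salca Q l"
proof
  fix w assume "w \<in> beh (quot Q l)"
  then obtain \<mu> \<nu> h where bq: "(\<mu>,\<nu>,h) \<in> full_beh (quot Q l)" and w: "w = ext \<nu>"
    unfolding beh_def by blast
  have wf: "sm_wf Q" and lr: "live_reachable Q" using sa unfolding standing_assumptions_def by auto
  have "\<forall>j. \<exists>a b. EI Q l a = h j \<and> EI Q l b = h (Suc j) \<and> (a, \<mu> j, \<nu> j, b) \<in> sm_delta Q"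
    using bq unfolding full_beh_def quot_def by simp metis
  then obtain xa xb where xab: "\<And>j. EI Q l (xa j) = h j" "\<And>j. EI Q l (xb j) = h (Suc j)"
    "\<And>j. (xa j, \<mu> j, \<nu> j, xb j) \<in> sm_delta Q"
    by metis
  have xaX: "xa j \<in> sm_X Q" for j using xab(3)[of j] wf unfolding sm_wf_def by auto
  have D1: "\<forall>j. \<exists>\<mu>' \<nu>' \<xi>' t. (\<mu>',\<nu>',\<xi>') \<in> full_beh Q \<and> \<xi>' t = xa j \<and> (\<forall>i<m. \<nu>' (t+i) = \<nu> (j+i))"
    if "m \<le> Suc l" for m
    using that
  proof (induction m)
    case 0
    show ?case using lr xaX unfolding live_reachable_def by blast
  next
    case (Suc m)
    show ?case
    proof
      fix j
      obtain \<mu>1 \<nu>1 \<xi>1 t1 where b1: "(\<mu>1,\<nu>1,\<xi>1) \<in> full_beh Q" "\<xi>1 t1 = xa (Suc j)"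
        "\<forall>i<m. \<nu>1 (t1+i) = \<nu> (Suc j+i)"
        using spec[OF Suc.IH[OF Suc_leD[OF Suc.prems]], of "Suc j"] by blast
      have "EI Q l (xa (Suc j)) = EI Q l (xb j)" using xab by simp
      from transfer[OF this b1(1,2)] obtain \<mu>2 \<nu>2 \<xi>2 t2 where b2: "(\<mu>2,\<nu>2,\<xi>2) \<in> full_beh Q"
        "\<xi>2 t2 = xb j" "\<forall>i<l. \<nu>2 (t2+i) = \<nu>1 (t1+i)" by blast
      from concat[OF wf lr xaX xab(3) b2(1,2)] obtain \<mu>3 \<nu>3 \<xi>3 t3 where
        b3: "(\<mu>3,\<nu>3,\<xi>3) \<in> full_beh Q" "\<xi>3 t3 = xa j" "\<nu>3 t3 = \<nu> j"
        "\<forall>i. \<nu>3 (Suc t3 + i) = \<nu>2 (t2 + i)" by blast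
      have "\<forall>i<Suc m. \<nu>3 (t3+i) = \<nu> (j+i)"
      proof (intro allI impI)
        fix i assume "i < Suc m"
        show "\<nu>3 (t3+i) = \<nu> (j+i)"
        proof (cases i)
          case 0 then show ?thesis using b3 by simp
        next
          case (Suc i')
          then have "i' < m" "i' < l" using \<open>i < Suc m\<close> Suc.prems by auto
          then show ?thesis using b3(4) b2(3) b1(3) Suc by simp
        qed
      qed
      then show "\<exists>\<mu>' \<nu>' \<xi>' t. (\<mu>',\<nu>',\<xi>') \<in> full_beh Q \<and> \<xi>' t = xa j \<and> (\<forall>i<Suc m. \<nu>' (t+i) = \<nu> (j+i))"
        using b3 by blast
    qed
  qed
  obtain x0 where x0: "x0 \<in> sm_X0 Q" "h 0 = EI Q l x0"
    using bq unfolding full_beh_def quot_def by auto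
  obtain \<mu>1 \<nu>1 \<xi>1 t1 where b1: "(\<mu>1,\<nu>1,\<xi>1) \<in> full_beh Q" "\<xi>1 t1 = xa 0"
        "\<forall>i<l. \<nu>1 (t1+i) = \<nu> (0+i)" using spec[OF D1[of l], of 0] by auto
  have "EI Q l (xa 0) = EI Q l x0" using xab x0 by simp
  from transfer[OF this b1(1,2)] obtain \<mu>2 \<nu>2 \<xi>2 t2 where b2: "(\<mu>2,\<nu>2,\<xi>2) \<in> full_beh Q"
        "\<xi>2 t2 = x0" "\<forall>i<l. \<nu>2 (t2+i) = \<nu>1 (t1+i)" by blast
  have sb: "(\<lambda>i. \<mu>2 (t2+i), \<lambda>i. \<nu>2 (t2+i), \<lambda>i. \<xi>2 (t2+i)) \<in> full_beh Q"
    using shift[OF b2(1)] b2(2) x0(1) by simp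
  define \<nu>0 where "\<nu>0 = (\<lambda>i. \<nu>2 (t2+i))"
  have v0beh: "ext \<nu>0 \<in> beh Q" using sb unfolding beh_def \<nu>0_def by blast
  have v0: "\<And>i. i < l \<Longrightarrow> \<nu> i = \<nu>0 i" using b1(3) b2(3) unfolding \<nu>0_def by simp
  show "w \<in> salca Q l"
    unfolding salca_def
  proof (simp, intro conjI allI impI)
    fix k :: int assume "k < 0" then show "w k = None" using w by (simp add: ext_def)
  next
    fix k :: int assume "0 \<le> k" then show "w k \<in> Some ` sm_Y Q"
      using w bq unfolding full_beh_def quot_def ext_def by auto
  next
    have "restr w (- int l) 0 = restr (ext \<nu>0) (- int l) 0"
      using w agree[of l \<nu> \<nu>0 0 "- int l"] v0 l1 by simp
    then show "restr w (- int l) 0 \<in> restr_set (beh Q) (- int l) 0"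
      unfolding restr_set_def using v0beh by blast
  next
    fix k :: nat
    show "restr w (int k - int l) (int k) \<in> Pi_l (Suc l) (beh Q)"
    proof (cases "k < l")
      case True
      have "restr w (int k - int l) (int k) = restr (ext \<nu>0) (int k - int l) (int k)"
        using w agree[of l \<nu> \<nu>0 "int k" "int k - int l"] v0 True by simp
      then show ?thesis using Pi_mem[OF v0beh] by simp
    next
      case False
      define j where "j = k - l"
      obtain \<mu>3 \<nu>3 \<xi>3 t3 where b3: "(\<mu>3,\<nu>3,\<xi>3) \<in> full_beh Q"
        "\<forall>i<Suc l. \<nu>3 (t3+i) = \<nu> (j+i)" using spec[OF D1[of "Suc l"], of j] by auto
      have e3: "ext \<nu>3 \<in> beh Q" using b3(1) unfolding beh_def by blast
      have "restr w (int k - int l) (int k) = restr (ext \<nu>3) (int (t3+l) - int l) (int (t3 + l))"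
        unfolding window
      proof (rule map_cong[OF refl])
        fix i assume "i \<in> set [0..<Suc l]"
        then have i: "i < Suc l" by (simp only: set_upt atLeastLessThan_iff)
        have "int k - int l + int i = int j + int i" using False unfolding j_def by simp
        moreover have "int (t3+l) - int l + int i = int t3 + int i" by simp
        ultimately show "w (int k - int l + int i) = ext \<nu>3 (int (t3 + l) - int l + int i)"
          using w b3(2) i by (simp add: ext_nat2)
      qed
      then show ?thesis using Pi_mem[OF e3, of "t3+l" l] by (simp only:)
    qed
  qed
qed

definition Pk :: "('x,'u,'y) sm \<Rightarrow> nat \<Rightarrow> (int \<Rightarrow> 'y option) \<Rightarrow> nat \<Rightarrow> 'x \<Rightarrow> bool" where
  "Pk Q l w k x \<longleftrightarrow> x \<in> sm_X Q \<and> (\<exists>\<mu>1 \<nu>1 \<xi>1 t. (\<mu>1,\<nu>1,\<xi>1) \<in> full_beh Q \<and> \<xi>1 t = x \<and>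
      (\<forall>i<l. Some (\<nu>1 (t+i)) = w (int k + int i)))"

lemma step:
  assumes dc: "domino_consistent Q l" and ws: "w \<in> salca Q l" and P: "Pk Q l w k x"
  shows "\<exists>u x''. (\<exists>x'. EI Q l x' = EI Q l x \<and> (x',u,the (w (int k)),x'') \<in> sm_delta Q) \<and> Pk Q l w (Suc k) x''"
proof -
  obtain \<mu>1 \<nu>1 \<xi>1 t where xX: "x \<in> sm_X Q" and b1: "(\<mu>1,\<nu>1,\<xi>1) \<in> full_beh Q" "\<xi>1 t = x"
    "\<forall>i<l. Some (\<nu>1 (t+i)) = w (int k + int i)" using P unfolding Pk_def by blast
  define \<zeta> where "\<zeta> = map (\<lambda>i. w (int k + int i)) [0..<Suc l]"
  have "restr w (int (k+l) - int l) (int (k+l)) \<in> Pi_l (Suc l) (beh Q)"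
    using ws unfolding salca_def by blast
  moreover have "restr w (int (k+l) - int l) (int (k+l)) = \<zeta>"
    unfolding window \<zeta>_def by simp
  ultimately have zP: "\<zeta> \<in> Pi_l (Suc l) (beh Q)" by simp
  have "take l \<zeta> = map (\<lambda>i. Some (\<nu>1 (t+i))) [0..<l]"
    unfolding \<zeta>_def using b1(3) by (simp add: take_map)
  then have "take l \<zeta> \<in> EI Q l x" unfolding EI_def Estr_iff using b1(1,2) by blast
  moreover have "EI Q l x \<in> sm_X (quot Q l)" using xX unfolding quot_def by simp
  ultimately obtain x' where x': "x' \<in> sm_X Q" "EI Q l x' = EI Q l x" "\<zeta> \<in> Estr Q 0 (int l) x'"
    using dc zP unfolding domino_consistent_def by blast
  have "\<zeta> \<in> Estr Q 0 (int (Suc l) - 1) x'" using x'(3) by simp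
  then obtain \<mu>2 \<nu>2 \<xi>2 t2 where b2: "(\<mu>2,\<nu>2,\<xi>2) \<in> full_beh Q" "\<xi>2 t2 = x'"
    "\<zeta> = map (\<lambda>i. Some (\<nu>2 (t2+i))) [0..<Suc l]" unfolding Estr_iff by blast
  have eq: "w (int k + int i) = Some (\<nu>2 (t2+i))" if "i < Suc l" for i
    using map_upt_eqD[OF b2(3)[unfolded \<zeta>_def] that] by simp
  have tr: "(\<xi>2 t2, \<mu>2 t2, \<nu>2 t2, \<xi>2 (Suc t2)) \<in> sm_delta Q" using b2(1) unfolding full_beh_def by blast
  have "the (w (int k)) = \<nu>2 t2" using eq[of 0] by simp
  moreover have "Pk Q l w (Suc k) (\<xi>2 (Suc t2))"
    unfolding Pk_def
  proof (intro conjI exI)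
    show "\<xi>2 (Suc t2) \<in> sm_X Q" using b2(1) unfolding full_beh_def by blast
    show "(\<mu>2,\<nu>2,\<xi>2) \<in> full_beh Q" by (fact b2(1))
    show "\<xi>2 (Suc t2) = \<xi>2 (Suc t2)" ..
    show "\<forall>i<l. Some (\<nu>2 (Suc t2 + i)) = w (int (Suc k) + int i)"
    proof (intro allI impI)
      fix i assume "i < l"
      then have "Suc i < Suc l" by simp
      from eq[OF this] have "w (int k + int (Suc i)) = Some (\<nu>2 (t2 + Suc i))" .
      moreover have "int k + int (Suc i) = int (Suc k) + int i" by simp
      ultimately show "Some (\<nu>2 (Suc t2 + i)) = w (int (Suc k) + int i)" by (metis add_Suc add_Suc_right)
    qed
  qed
  ultimately show ?thesis using tr b2(2) x'(2) by metis
qed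

lemma dir2:
  assumes sa: "standing_assumptions Q" and l1: "l \<ge> 1" and dc: "domino_consistent Q l"
  shows "salca Q l \<subseteq> beh (quot Q l)"
proof
  fix w assume ws: "w \<in> salca Q l"
  have wf: "sm_wf Q" using sa unfolding standing_assumptions_def by auto
  have neg: "\<And>k. k < 0 \<Longrightarrow> w k = None" and pos: "\<And>k. k \<ge> 0 \<Longrightarrow> w k \<in> Some ` sm_Y Q"
    using ws unfolding salca_def by auto
  have "restr w (int (l-1) - int l) (int (l-1)) \<in> Pi_l (Suc l) (beh Q)"
    using ws unfolding salca_def by blast
  then obtain k' v where v: "v \<in> beh Q"
    and eqr: "restr w (int (l-1) - int l) (int (l-1)) = restr v (int k' - int (Suc l) + 1) (int k')"
    unfolding Pi_l_def restr_set_def by blast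
  obtain \<mu>1 \<nu>1 \<xi>1 where b1: "(\<mu>1,\<nu>1,\<xi>1) \<in> full_beh Q" and vv: "v = ext \<nu>1"
    using v unfolding beh_def by blast
  have "int k' - int (Suc l) + 1 = int k' - int l" by simp
  then have eqm: "map (\<lambda>i. w (int (l-1) - int l + int i)) [0..<Suc l] = map (\<lambda>i. v (int k' - int l + int i)) [0..<Suc l]"
    using eqr by (simp only: window)
  have pt: "w (int (l-1) - int l + int i) = v (int k' - int l + int i)" if "i < Suc l" for i
    using map_upt_eqD[OF eqm that] .
  have "w (-1) = None" using neg by simp
  then have "v (int k' - int l) = None" using pt[of 0] l1 by simp
  then have "int k' < int l" using vv unfolding ext_def by (auto split: if_splits)
  moreover have "v (int k' - int l + 1) \<noteq> None"
  proof -
    have "w 0 \<noteq> None" using pos[of 0] by auto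
    moreover have "int (l-1) - int l + int 1 = 0" using l1 by simp
    ultimately show ?thesis using pt[of 1] l1 by simp
  qed
  then have "int k' - int l + 1 \<ge> 0" using vv unfolding ext_def by (auto split: if_splits)
  ultimately have kl: "int k' = int l - 1" by simp
  have P0: "Pk Q l w 0 (\<xi>1 0)"
    unfolding Pk_def
  proof (intro conjI exI)
    show "\<xi>1 0 \<in> sm_X Q" using b1 unfolding full_beh_def by blast
    show "(\<mu>1,\<nu>1,\<xi>1) \<in> full_beh Q" by (fact b1)
    show "\<xi>1 0 = \<xi>1 0" ..
    show "\<forall>i<l. Some (\<nu>1 (0+i)) = w (int 0 + int i)"
    proof (intro allI impI)
      fix i assume "i < l"
      then have "Suc i < Suc l" by simp
      from pt[OF this] have "w (int (l-1) - int l + int (Suc i)) = v (int k' - int l + int (Suc i))" .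
      moreover have "int (l-1) - int l + int (Suc i) = int i" using l1 by simp
      moreover have "int k' - int l + int (Suc i) = int i" using kl by simp
      ultimately have "w (int i) = v (int i)" by metis
      then show "Some (\<nu>1 (0+i)) = w (int 0 + int i)" using vv by (simp add: ext_nat1)
    qed
  qed
  have x0: "\<xi>1 0 \<in> sm_X0 Q" using b1 unfolding full_beh_def by blast
  have "\<forall>k x. \<exists>ux. Pk Q l w k x \<longrightarrow> ((\<exists>x'. EI Q l x' = EI Q l x \<and> (x',fst ux,the (w (int k)),snd ux) \<in> sm_delta Q) \<and> Pk Q l w (Suc k) (snd ux))"
    using step[OF dc ws] by fastforce
  then obtain g where g: "\<And>k x. Pk Q l w k x \<Longrightarrow> (\<exists>x'. EI Q l x' = EI Q l x \<and> (x',fst (g k x),the (w (int k)),snd (g k x)) \<in> sm_delta Q) \<and> Pk Q l w (Suc k) (snd (g k x))"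
    by metis
  define s where "s = rec_nat (\<xi>1 0) (\<lambda>k x. snd (g k x))"
  have s0: "s 0 = \<xi>1 0" and sS: "\<And>k. s (Suc k) = snd (g k (s k))" unfolding s_def by simp_all
  have Ps: "Pk Q l w k (s k)" for k
    by (induction k) (use P0 s0 sS g in auto)
  define \<mu> where "\<mu> k = fst (g k (s k))" for k
  define \<nu> where "\<nu> k = the (w (int k))" for k
  define h where "h k = EI Q l (s k)" for k
  have "(\<mu>,\<nu>,h) \<in> full_beh (quot Q l)"
    unfolding full_beh_def quot_def
  proof (simp, intro conjI allI)
    show "h 0 \<in> EI Q l ` sm_X0 Q" using s0 x0 unfolding h_def by simp
  next
    fix k
    obtain x' where tr: "EI Q l x' = EI Q l (s k)" "(x', \<mu> k, \<nu> k, s (Suc k)) \<in> sm_delta Q"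
      using g[OF Ps[of k]] sS unfolding \<mu>_def \<nu>_def by auto
    show "\<mu> k \<in> sm_U Q" using tr(2) wf unfolding sm_wf_def by auto
    show "\<nu> k \<in> sm_Y Q" using pos[of "int k"] unfolding \<nu>_def by auto
    show "h k \<in> EI Q l ` sm_X Q" using Ps[of k] unfolding h_def Pk_def by simp
    show "\<exists>x. h k = EI Q l x \<and> (\<exists>x'. h (Suc k) = EI Q l x' \<and> (x, \<mu> k, \<nu> k, x') \<in> sm_delta Q)"
      using tr unfolding h_def by metis
  qed
  moreover have "w = ext \<nu>"
  proof
    fix k show "w k = ext \<nu> k"
    proof (cases "k < 0")
      case True then show ?thesis using neg by (simp add: ext_def)
    next
      case False
      then show ?thesis using pos[of k] unfolding ext_def \<nu>_def by auto
    qed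
  qed
  ultimately show "w \<in> beh (quot Q l)" unfolding beh_def by blast
qed

theorem corollary10:
  fixes Q :: "('x,'u,'y) sm" and l :: nat
  assumes "standing_assumptions Q"
    and "l \<ge> 1"
    and "domino_consistent Q l"
  shows "beh (quot Q l) = salca Q l"
  using dir1[OF assms(1,2)] dir2[OF assms] by (rule equalityI)

end
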